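(* Let $S$ be a list of sequences (indexed from $0$), and let $\rho(S[i],S[j])$ denote the length of the maximal common prefix of the sequences at indices $i$ and $j$. Define the overlap of $S[j]$ with respect to $S$ as $\mathcal{O}_S(j) := \max_{i<j} \rho(S[i],S[j])$ and the overlap of $S$ as $\mathcal{O}(S) := \sum_{j>0} \mathcal{O}_S(j)$. Let $L$ be the lexicographically ordered permutation of $S$. Then \[ \mathcal{O}(S) = \mathcal{O}(L) = \sum_{j>0} \rho(L[j-1],L[j]). \]
   Context: Setting: batch processing of shortest path queries in a road network. For each query, shortcut chains (sequences of vertices in a shortcut graph, oriented from the hub vertex to a query endpoint) are computed and then unpacked into paths; when unpacking a chain, the unpacked common prefix with a previously unpacked chain can be copied instead of recomputed. The overlap $\mathcal{O}(S)$ measures the amount of unpacking work saved for a given processing order of the list of chains $S$. *)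

theory Defs
  imports Main "HOL-Library.List_Lexorder"
begin

fun rho :: "'a list \<Rightarrow> 'a list \<Rightarrow> nat" where
  "rho (x # xs) (y # ys) = (if x = y then Suc (rho xs ys) else 0)"
| "rho _ _ = 0"

text \<open>Overlap of S[j] with respect to S: max over i < j of rho (S!i) (S!j)
  (only used for 0 < j < length S, where the index set is nonempty).\<close>
definition overlap_at :: "'a list list \<Rightarrow> nat \<Rightarrow> nat" where
  "overlap_at S j = Max {rho (S ! i) (S ! j) | i. i < j}"

definition overlap :: "'a list list \<Rightarrow> nat" where
  "overlap S = (\<Sum>j\<in>{1..<length S}. overlap_at S j)"

end

theory Submission
  imports Defs "HOL-Library.Multiset"
begin

lemma rho_le_len: "rho x y \<le> length x" "rho x y \<le> length y"
  by (induction x y rule: rho.induct) auto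

lemma rho_mono:
  fixes a b c :: "('a::linorder) list"
  shows "a \<le> b \<Longrightarrow> b \<le> c \<Longrightarrow> rho a c \<le> rho b c"
proof (induction c arbitrary: a b)
  case Nil then show ?case by simp
next
  case (Cons z c')
  show ?case
  proof (cases a)
    case Nil then show ?thesis by simp
  next
    case (Cons x a')
    with Cons.prems obtain y b' where b: "b = y # b'"
      by (cases b) auto
    show ?thesis
    proof (cases "x = z")
      case True
      with Cons.prems \<open>a = x # a'\<close> b have "x = y" "a' \<le> b'" "b' \<le> c'"
        by auto
      with Cons.IH[of a' b'] True \<open>a = x # a'\<close> b show ?thesis by simp
    next
      case False then show ?thesis using \<open>a = x # a'\<close> by simp
    qed
  qed
qed

lemma take_eq_rho:
  "k \<le> length x \<Longrightarrow> k \<le> length y \<Longrightarrow> (take k x = take k y) = (k \<le> rho y x)"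
proof (induction y x arbitrary: k rule: rho.induct)
  case (1 y ys x xs)
  then show ?case by (cases k) auto
qed auto

definition pre :: "'a list \<Rightarrow> 'a list set" where
  "pre xs = (\<lambda>k. take k xs) ` {1..length xs}"

lemma card_pre_sub: assumes that: "m \<le> length xs" shows "card ((\<lambda>k. take k xs) ` {1..m}) = m"
proof -
  have "inj_on (\<lambda>k. take k xs) {1..m}"
  proof (rule inj_onI)
    fix a b assume "a \<in> {1..m}" "b \<in> {1..m}" "take a xs = take b xs"
    then have "length (take a xs) = length (take b xs)" by simp
    then show "a = b" using \<open>a \<in> {1..m}\<close> \<open>b \<in> {1..m}\<close> that by simp
  qed
  then show ?thesis by (simp add: card_image)
qed

lemma card_pre: "card (pre xs) = length xs"
  unfolding pre_def by (rule card_pre_sub) simp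

definition UU :: "'a list list \<Rightarrow> 'a list set" where
  "UU S = \<Union> (pre ` set S)"

definition ov :: "'a list list \<Rightarrow> 'a list \<Rightarrow> nat" where
  "ov S x = (if S = [] then 0 else Max {rho (S ! i) x | i. i < length S})"

lemma fin_rho: "finite {rho (S ! i) x | i. i < (j::nat)}"
  by (rule finite_subset[where B = "(\<lambda>i. rho (S ! i) x) ` {..<j}"]) auto

lemma ov_le: "ov S x \<le> length x"
proof (cases "S = []")
  case False
  then have "{rho (S ! i) x | i. i < length S} \<noteq> {}" by auto
  then show ?thesis unfolding ov_def using False fin_rho rho_le_len by (auto intro!: Max.boundedI)
qed (simp add: ov_def)

lemma inter_pre: "pre x \<inter> UU S = (\<lambda>k. take k x) ` {1..ov S x}"
proof (cases "S = []")
  case True then show ?thesis by (simp add: UU_def ov_def)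
next
  case False
  have ne: "{rho (S ! i) x | i. i < length S} \<noteq> {}" using False by auto
  show ?thesis
  proof (intro equalityI subsetI)
    fix t assume t: "t \<in> pre x \<inter> UU S"
    then obtain k where k: "1 \<le> k" "k \<le> length x" "t = take k x" by (auto simp: pre_def)
    from t obtain y m where y: "y \<in> set S" "1 \<le> m" "m \<le> length y" "t = take m y"
      by (auto simp: UU_def pre_def)
    have "m = length (take m y)" using y by simp
    also have "\<dots> = length (take k x)" using y k by metis
    also have "\<dots> = k" using k by simp
    finally have "m = k" .
    then obtain i where i: "i < length S" "S ! i = y" using y by (auto simp: in_set_conv_nth)
    have "k \<le> rho y x" using take_eq_rho[of k x y] k y \<open>m = k\<close> by auto
    also have "\<dots> \<le> ov S x" unfolding ov_def using False i fin_rho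
      by (auto intro!: Max_ge)
    finally show "t \<in> (\<lambda>k. take k x) ` {1..ov S x}" using k by auto
  next
    fix t assume "t \<in> (\<lambda>k. take k x) ` {1..ov S x}"
    then obtain k where k: "1 \<le> k" "k \<le> ov S x" "t = take k x" by auto
    have "ov S x \<in> {rho (S ! i) x | i. i < length S}"
      unfolding ov_def using False Max_in[OF fin_rho ne] by (simp only: if_False)
    then obtain i where i: "i < length S" "ov S x = rho (S ! i) x" by auto
    have kx: "k \<le> length x" using k ov_le[of S x] by simp
    have ky: "k \<le> length (S ! i)" using k i rho_le_len(1)[of "S ! i" x] by simp
    have "take k x = take k (S ! i)" using take_eq_rho[OF kx ky] k i by simp
    moreover have "take k (S ! i) \<in> pre (S ! i)" using k ky by (auto simp: pre_def)
    moreover have "t \<in> pre x" using k kx by (auto simp: pre_def)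
    moreover have "S ! i \<in> set S" using i by simp
    ultimately show "t \<in> pre x \<inter> UU S" using k
      unfolding UU_def by auto
  qed
qed

lemma setc: "{f i | i. i < (j::nat)} = f ` {..<j}" by auto
lemma setc_cong: "(\<And>i. i < j \<Longrightarrow> f i = g i) \<Longrightarrow> {f i | i. i < (j::nat)} = {g i | i. i < j}"
  unfolding setc by (rule image_cong) auto

lemma overlap_snoc: "overlap (S @ [x]) = overlap S + ov S x"
proof -
  have a: "overlap_at (S @ [x]) j = overlap_at S j" if "j < length S" for j
  proof -
    have "\<And>i. i < j \<Longrightarrow> rho ((S @ [x]) ! i) ((S @ [x]) ! j) = rho (S ! i) (S ! j)"
      using that by (simp add: nth_append)
    then have "{rho ((S @ [x]) ! i) ((S @ [x]) ! j) | i. i < j} = {rho (S ! i) (S ! j) | i. i < j}"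
      by (rule setc_cong)
    then show ?thesis by (simp only: overlap_at_def)
  qed
  have b: "overlap_at (S @ [x]) (length S) = ov S x" if "S \<noteq> []"
  proof -
    have "\<And>i. i < length S \<Longrightarrow> rho ((S @ [x]) ! i) ((S @ [x]) ! length S) = rho (S ! i) x"
      by (simp add: nth_append)
    then have "{rho ((S @ [x]) ! i) ((S @ [x]) ! length S) | i. i < length S} = {rho (S ! i) x | i. i < length S}"
      by (rule setc_cong)
    then show ?thesis using that by (simp only: overlap_at_def ov_def if_False)
  qed
  show ?thesis
  proof (cases "S = []")
    case True then show ?thesis by (simp add: overlap_def ov_def)
  next
    case False
    have "{1..<length (S @ [x])} = insert (length S) {1..<length S}"
      using False by (cases S) auto
    then have "overlap (S @ [x]) = overlap_at (S @ [x]) (length S) + (\<Sum>j\<in>{1..<length S}. overlap_at (S @ [x]) j)"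
      by (simp add: overlap_def)
    also have "(\<Sum>j\<in>{1..<length S}. overlap_at (S @ [x]) j) = overlap S"
      unfolding overlap_def by (rule sum.cong) (auto intro: a)
    finally show ?thesis using b[OF False] by simp
  qed
qed

lemma main_eq: "overlap S + card (UU S) = sum_list (map length S)"
proof (induction S rule: rev_induct)
  case Nil then show ?case by (simp add: overlap_def UU_def)
next
  case (snoc x S)
  have fin: "finite (UU S)" by (simp add: UU_def pre_def)
  have finp: "finite (pre x)" by (simp add: pre_def)
  have "UU (S @ [x]) = pre x \<union> UU S" by (auto simp: UU_def)
  then have "card (UU (S @ [x])) + card (pre x \<inter> UU S) = card (pre x) + card (UU S)"
    using card_Un_Int[OF finp fin] by simp
  then have "card (UU (S @ [x])) + ov S x = length x + card (UU S)"
    using inter_pre[of x S] card_pre[of x] card_pre_sub[OF ov_le[of S x]] by simp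
  then show ?case using snoc overlap_snoc[of S x] by simp
qed

lemma overlap_at_sorted:
  fixes L :: "('a::linorder) list list"
  assumes "sorted L" "0 < j" "j < length L"
  shows "overlap_at L j = rho (L ! (j - 1)) (L ! j)"
  unfolding overlap_at_def
proof (rule Max_eqI)
  show "finite {rho (L ! i) (L ! j) |i. i < j}" by (rule fin_rho)
  show "rho (L ! (j - 1)) (L ! j) \<in> {rho (L ! i) (L ! j) |i. i < j}" using assms by auto
  fix y assume "y \<in> {rho (L ! i) (L ! j) |i. i < j}"
  then obtain i where i: "i < j" "y = rho (L ! i) (L ! j)" by auto
  have "L ! i \<le> L ! (j - 1)" "L ! (j - 1) \<le> L ! j"
    using assms i by (auto simp: sorted_iff_nth_mono)
  then show "y \<le> rho (L ! (j - 1)) (L ! j)" using rho_mono i by blast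
qed

theorem theorem8p1:
  fixes S :: "('a::linorder) list list"
  defines "L \<equiv> sort S"
  shows "overlap S = overlap L \<and>
         overlap L = (\<Sum>j\<in>{1..<length L}. rho (L ! (j - 1)) (L ! j))"
proof
  have "UU L = UU S" by (simp add: L_def UU_def)
  moreover have "sum_list (map length L) = sum_list (map length S)"
    unfolding L_def by (metis mset_map mset_sort sum_mset_sum_list)
  ultimately show "overlap S = overlap L" using main_eq[of S] main_eq[of L] by simp
  show "overlap L = (\<Sum>j\<in>{1..<length L}. rho (L ! (j - 1)) (L ! j))"
    unfolding overlap_def using overlap_at_sorted[of L] by (simp add: L_def)
qed

end
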